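(* For every $\varepsilon>0$ there exists a simple bipartite cubic graph $G$ such that every traveling salesman tour of $G$ has length at least $(1.2-\varepsilon)\,|V(G)|$.
   Context: A traveling salesman tour (TSP tour) of a graph $G$ is a closed walk in $G$ that visits every vertex of $G$; its length is the number of edges traversed, counted with multiplicity. *)

theory Defs
  imports Complex_Main
begin

definition simple_graph :: "nat set \<Rightarrow> (nat \<Rightarrow> nat \<Rightarrow> bool) \<Rightarrow> bool" where
  "simple_graph V E \<longleftrightarrow> finite V \<and>
     (\<forall>x y. E x y \<longrightarrow> x \<in> V \<and> y \<in> V) \<and>
     (\<forall>x y. E x y \<longrightarrow> E y x) \<and> (\<forall>x. \<not> E x x)"

definition cubic :: "nat set \<Rightarrow> (nat \<Rightarrow> nat \<Rightarrow> bool) \<Rightarrow> bool" where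
  "cubic V E \<longleftrightarrow> (\<forall>x\<in>V. card {y. E x y} = 3)"

definition bipartite :: "nat set \<Rightarrow> (nat \<Rightarrow> nat \<Rightarrow> bool) \<Rightarrow> bool" where
  "bipartite V E \<longleftrightarrow> (\<exists>A B. A \<union> B = V \<and> A \<inter> B = {} \<and>
     (\<forall>x y. E x y \<longrightarrow> (x \<in> A \<and> y \<in> B) \<or> (x \<in> B \<and> y \<in> A)))"

definition is_walk :: "nat set \<Rightarrow> (nat \<Rightarrow> nat \<Rightarrow> bool) \<Rightarrow> nat list \<Rightarrow> bool" where
  "is_walk V E w \<longleftrightarrow> w \<noteq> [] \<and> set w \<subseteq> V \<and>
     (\<forall>i. Suc i < length w \<longrightarrow> E (w ! i) (w ! Suc i))"

definition connected_graph :: "nat set \<Rightarrow> (nat \<Rightarrow> nat \<Rightarrow> bool) \<Rightarrow> bool" where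
  "connected_graph V E \<longleftrightarrow> V \<noteq> {} \<and>
     (\<forall>x\<in>V. \<forall>y\<in>V. \<exists>w. is_walk V E w \<and> hd w = x \<and> last w = y)"

definition tsp_tour :: "nat set \<Rightarrow> (nat \<Rightarrow> nat \<Rightarrow> bool) \<Rightarrow> nat list \<Rightarrow> bool" where
  "tsp_tour V E w \<longleftrightarrow> is_walk V E w \<and> hd w = last w \<and> set w = V"

definition walk_length :: "nat list \<Rightarrow> nat" where
  "walk_length w = length w - 1"

end

theory Submission
  imports Defs
begin


fun gn :: "nat \<Rightarrow> nat" where
  "gn 0 = 6" | "gn (Suc k) = 2 * gn k + 4"

fun gm :: "nat \<Rightarrow> nat" where
  "gm 0 = 0" | "gm (Suc k) = 2 * gm k + 2"

definition locE :: "nat \<Rightarrow> nat \<Rightarrow> nat \<Rightarrow> nat \<Rightarrow> bool" where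
  "locE n c x y \<longleftrightarrow> (x = c \<and> y = c+1) \<or> (x = c+1 \<and> y = c+2) \<or> (x = c \<and> y = c+3) \<or>
     (x = c+3 \<and> y = c+4) \<or> (x = c+3 \<and> y = c+4+n) \<or> (x = c+2 \<and> y = c+5) \<or> (x = c+2 \<and> y = c+5+n)"

fun gE :: "nat \<Rightarrow> nat \<Rightarrow> nat \<Rightarrow> nat \<Rightarrow> bool" where
  "gE 0 c x y \<longleftrightarrow>
     ((x = c \<or> x = c+2 \<or> x = c+4) \<and> (y = c+1 \<or> y = c+3 \<or> y = c+5) \<and> \<not>(x = c \<and> y = c+1)) \<or>
     ((y = c \<or> y = c+2 \<or> y = c+4) \<and> (x = c+1 \<or> x = c+3 \<or> x = c+5) \<and> \<not>(y = c \<and> x = c+1))"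
| "gE (Suc k) c x y \<longleftrightarrow> locE (gn k) c x y \<or> locE (gn k) c y x \<or> gE k (c+4) x y \<or> gE k (c+4+gn k) x y"

lemma gn_ge: "gn k \<ge> 6"
  by (induction k) auto

lemma gn_even: "even (gn k)"
  by (induction k) auto

lemma gn_gm: "gn k = 5 * gm k + 6"
  by (induction k) auto

lemma gn_ge_k: "gn k \<ge> k"
  by (induction k) auto

lemma gE_range: "gE k c x y \<Longrightarrow> c \<le> x \<and> x < c + gn k \<and> c \<le> y \<and> y < c + gn k"
proof (induction k arbitrary: c)
  case 0 then show ?case by auto
next
  case (Suc k)
  have "gn k \<ge> 6" by (rule gn_ge)
  from Suc.prems show ?case
    using Suc.IH[of "c+4"] Suc.IH[of "c+4+gn k"] \<open>gn k \<ge> 6\<close> by (auto simp: locE_def)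
qed

lemma gE_sym: "gE k c x y = gE k c y x"
  by (induction k arbitrary: c) auto

lemma gE_irr: "\<not> gE k c x x"
  by (induction k arbitrary: c) (auto simp: locE_def)

lemma gE_par: "even c \<Longrightarrow> gE k c x y \<Longrightarrow> even x \<longleftrightarrow> odd y"
proof (induction k arbitrary: c)
  case 0 then show ?case by auto
next
  case (Suc k)
  have e: "even (gn k)" by (rule gn_even)
  from Suc.prems show ?case
    using Suc.IH[of "c+4"] Suc.IH[of "c+4+gn k"] e by (auto simp: locE_def)
qed

lemma gE_fin: "finite {y. gE k c x y}"
proof -
  have "{y. gE k c x y} \<subseteq> {..<c + gn k}" using gE_range by fastforce
  then show ?thesis using finite_subset by blast
qed

lemma gE_deg0: "c \<le> x \<Longrightarrow> x < c + 6 \<Longrightarrow> card {y. gE 0 c x y} = (if x = c \<or> x = c+1 then 2 else 3)"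
proof -
  assume a: "c \<le> x" "x < c + 6"
  then have "x = c \<or> x = c+1 \<or> x = c+2 \<or> x = c+3 \<or> x = c+4 \<or> x = c+5" by linarith
  then show ?thesis
  proof (elim disjE)
    assume "x = c" then have "{y. gE 0 c x y} = {c+3, c+5}" by auto
    then show ?thesis using \<open>x = c\<close> by simp
  next
    assume "x = c+1" then have "{y. gE 0 c x y} = {c+2, c+4}" by auto
    then show ?thesis using \<open>x = c+1\<close> by simp
  next
    assume "x = c+2" then have "{y. gE 0 c x y} = {c+1, c+3, c+5}" by auto
    then show ?thesis using \<open>x = c+2\<close> by simp
  next
    assume "x = c+3" then have "{y. gE 0 c x y} = {c, c+2, c+4}" by auto
    then show ?thesis using \<open>x = c+3\<close> by simp
  next
    assume "x = c+4" then have "{y. gE 0 c x y} = {c+1, c+3, c+5}" by auto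
    then show ?thesis using \<open>x = c+4\<close> by simp
  next
    assume "x = c+5" then have "{y. gE 0 c x y} = {c, c+2, c+4}" by auto
    then show ?thesis using \<open>x = c+5\<close> by simp
  qed
qed

lemma gE_lo1: "x < c' \<Longrightarrow> \<not> gE k c' x y" using gE_range by fastforce
lemma gE_lo2: "y < c' \<Longrightarrow> \<not> gE k c' x y" using gE_range by fastforce
lemma gE_hi1: "c' + gn k \<le> x \<Longrightarrow> \<not> gE k c' x y" using gE_range by fastforce
lemma gE_hi2: "c' + gn k \<le> y \<Longrightarrow> \<not> gE k c' x y" using gE_range by fastforce

lemma gE_Suc_hub:
  shows "gE (Suc k) c c y \<longleftrightarrow> y = c+1 \<or> y = c+3"
    and "gE (Suc k) c (c+1) y \<longleftrightarrow> y = c \<or> y = c+2"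
    and "gE (Suc k) c (c+2) y \<longleftrightarrow> y = c+1 \<or> y = c+5 \<or> y = c+5+gn k"
    and "gE (Suc k) c (c+3) y \<longleftrightarrow> y = c \<or> y = c+4 \<or> y = c+4+gn k"
  by (auto simp: locE_def gE_lo1)

lemma gE_Suc_c1: "c+4 \<le> x \<Longrightarrow> x < c+4+gn k \<Longrightarrow>
   gE (Suc k) c x y \<longleftrightarrow> gE k (c+4) x y \<or> (x = c+4 \<and> y = c+3) \<or> (x = c+5 \<and> y = c+2)"
  using gE_lo1[of x "c+4+gn k" k y] by (auto simp: locE_def)

lemma gE_Suc_c2: "c+4+gn k \<le> x \<Longrightarrow> x < c+4+gn k+gn k \<Longrightarrow>
   gE (Suc k) c x y \<longleftrightarrow> gE k (c+4+gn k) x y \<or> (x = c+4+gn k \<and> y = c+3) \<or> (x = c+5+gn k \<and> y = c+2)"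
  using gn_ge[of k] gE_hi1[of "c+4" k x y] by (auto simp: locE_def)

lemma card_ins2: "finite N \<Longrightarrow> a \<notin> N \<Longrightarrow> card (insert a N) = Suc (card N)" by simp

lemma gE_deg: "c \<le> x \<Longrightarrow> x < c + gn k \<Longrightarrow> card {y. gE k c x y} = (if x = c \<or> x = c+1 then 2 else 3)"
proof (induction k arbitrary: c x)
  case 0 then show ?case using gE_deg0 by simp
next
  case (Suc k)
  define n where "n = gn k"
  have n6: "n \<ge> 6" unfolding n_def by (rule gn_ge)
  have xr: "x < c + 2*n + 4" using Suc.prems n_def by simp
  consider "x = c" | "x = c+1" | "x = c+2" | "x = c+3" | "c+4 \<le> x \<and> x < c+4+n" | "c+4+n \<le> x \<and> x < c+4+n+n"
    using Suc.prems(1) xr by linarith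
  then show ?case
  proof cases
    case 1
    have "{y. gE (Suc k) c x y} = {c+1, c+3}" using 1 gE_Suc_hub(1) by auto
    then show ?thesis using 1 by simp
  next
    case 2
    have "{y. gE (Suc k) c x y} = {c, c+2}" using 2 gE_Suc_hub(2) by auto
    then show ?thesis using 2 by simp
  next
    case 3
    have "{y. gE (Suc k) c x y} = {c+1, c+5, c+5+n}" using 3 gE_Suc_hub(3)[of k c] n_def by auto
    then show ?thesis using 3 n6 by simp
  next
    case 4
    have "{y. gE (Suc k) c x y} = {c, c+4, c+4+n}" using 4 gE_Suc_hub(4)[of k c] n_def by auto
    then show ?thesis using 4 n6 by simp
  next
    case 5
    have eq: "\<And>y. gE (Suc k) c x y \<longleftrightarrow> gE k (c+4) x y \<or> (x = c+4 \<and> y = c+3) \<or> (x = c+5 \<and> y = c+2)"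
      using 5 gE_Suc_c1[of c x k] n_def by blast
    have IH: "card {y. gE k (c+4) x y} = (if x = c+4 \<or> x = c+4+1 then 2 else 3)"
      using Suc.IH[of "c+4" x] 5 n_def by simp
    have nin: "c+3 \<notin> {y. gE k (c+4) x y}" "c+2 \<notin> {y. gE k (c+4) x y}" using gE_lo2 by auto
    show ?thesis
    proof (cases "x = c+4")
      case True
      then have "{y. gE (Suc k) c x y} = insert (c+3) {y. gE k (c+4) x y}" using eq by auto
      then show ?thesis using IH nin True gE_fin by simp
    next
      case F1: False
      show ?thesis
      proof (cases "x = c+5")
        case True
        then have "{y. gE (Suc k) c x y} = insert (c+2) {y. gE k (c+4) x y}" using eq by auto
        then show ?thesis using IH nin True gE_fin by simp
      next
        case False
        then have "{y. gE (Suc k) c x y} = {y. gE k (c+4) x y}" using eq F1 by auto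
        then show ?thesis using IH F1 False 5 by simp
      qed
    qed
  next
    case 6
    have eq: "\<And>y. gE (Suc k) c x y \<longleftrightarrow> gE k (c+4+n) x y \<or> (x = c+4+n \<and> y = c+3) \<or> (x = c+5+n \<and> y = c+2)"
      using 6 gE_Suc_c2[of c k x] n_def by auto
    have IH: "card {y. gE k (c+4+n) x y} = (if x = c+4+n \<or> x = c+4+n+1 then 2 else 3)"
      using Suc.IH[of "c+4+n" x] 6 n_def by simp
    have nin: "c+3 \<notin> {y. gE k (c+4+n) x y}" "c+2 \<notin> {y. gE k (c+4+n) x y}" using gE_lo2 by auto
    show ?thesis
    proof (cases "x = c+4+n")
      case True
      then have "{y. gE (Suc k) c x y} = insert (c+3) {y. gE k (c+4+n) x y}" using eq by auto
      then show ?thesis using IH nin True gE_fin by simp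
    next
      case F1: False
      show ?thesis
      proof (cases "x = c+5+n")
        case True
        then have "{y. gE (Suc k) c x y} = insert (c+2) {y. gE k (c+4+n) x y}" using eq by auto
        then show ?thesis using IH nin True gE_fin by simp
      next
        case False
        then have "{y. gE (Suc k) c x y} = {y. gE k (c+4+n) x y}" using eq F1 by auto
        then show ?thesis using IH F1 False 6 by simp
      qed
    qed
  qed
qed

lemma gE_conn: "c \<le> x \<Longrightarrow> x < c + gn k \<Longrightarrow> (gE k c)\<^sup>*\<^sup>* c x"
proof (induction k arbitrary: c x)
  case 0
  have e: "gE 0 c c (c+3)" "gE 0 c (c+3) (c+2)" "gE 0 c (c+2) (c+1)" "gE 0 c (c+3) (c+4)" "gE 0 c (c+4) (c+5)"
    by auto
  have r3: "(gE 0 c)\<^sup>*\<^sup>* c (c+3)" using e by blast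
  have r2: "(gE 0 c)\<^sup>*\<^sup>* c (c+2)" using r3 e by (meson rtranclp.rtrancl_into_rtrancl)
  have r1: "(gE 0 c)\<^sup>*\<^sup>* c (c+1)" using r2 e by (meson rtranclp.rtrancl_into_rtrancl)
  have r4: "(gE 0 c)\<^sup>*\<^sup>* c (c+4)" using r3 e by (meson rtranclp.rtrancl_into_rtrancl)
  have r5: "(gE 0 c)\<^sup>*\<^sup>* c (c+5)" using r4 e by (meson rtranclp.rtrancl_into_rtrancl)
  have "x = c \<or> x = c+1 \<or> x = c+2 \<or> x = c+3 \<or> x = c+4 \<or> x = c+5" using 0 by (simp, linarith)
  then show ?case using r1 r2 r3 r4 r5 by (auto simp del: gE.simps)
next
  case (Suc k)
  define n where "n = gn k"
  have xr: "x < c + 2*n + 4" using Suc.prems n_def by simp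
  have e: "gE (Suc k) c c (c+1)" "gE (Suc k) c (c+1) (c+2)" "gE (Suc k) c c (c+3)"
     "gE (Suc k) c (c+3) (c+4)" "gE (Suc k) c (c+3) (c+4+n)"
    by (auto simp: locE_def n_def)
  have mono1: "\<And>a b. gE k (c+4) a b \<Longrightarrow> gE (Suc k) c a b" by simp
  have mono2: "\<And>a b. gE k (c+4+n) a b \<Longrightarrow> gE (Suc k) c a b" by (simp add: n_def)
  have r3: "(gE (Suc k) c)\<^sup>*\<^sup>* c (c+3)" using e by blast
  have r1: "(gE (Suc k) c)\<^sup>*\<^sup>* c (c+1)" using e by blast
  have r2: "(gE (Suc k) c)\<^sup>*\<^sup>* c (c+2)" using r1 e by (meson rtranclp.rtrancl_into_rtrancl)
  have r4: "(gE (Suc k) c)\<^sup>*\<^sup>* c (c+4)" using r3 e by (meson rtranclp.rtrancl_into_rtrancl)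
  have r5: "(gE (Suc k) c)\<^sup>*\<^sup>* c (c+4+n)" using r3 e by (meson rtranclp.rtrancl_into_rtrancl)
  consider "x = c" | "x = c+1" | "x = c+2" | "x = c+3" | "c+4 \<le> x \<and> x < c+4+n" | "c+4+n \<le> x \<and> x < c+4+n+n"
    using Suc.prems(1) xr by linarith
  then show ?case
  proof cases
    case 5
    have "(gE k (c+4))\<^sup>*\<^sup>* (c+4) x" using Suc.IH[of "c+4" x] 5 n_def by simp
    then have "(gE (Suc k) c)\<^sup>*\<^sup>* (c+4) x" using mono_rtranclp[of "gE k (c+4)" "gE (Suc k) c"] mono1 by blast
    then show ?thesis by (rule rtranclp_trans[OF r4])
  next
    case 6
    have "(gE k (c+4+n))\<^sup>*\<^sup>* (c+4+n) x" using Suc.IH[of "c+4+n" x] 6 n_def by simp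
    then have "(gE (Suc k) c)\<^sup>*\<^sup>* (c+4+n) x" using mono_rtranclp[of "gE k (c+4+n)" "gE (Suc k) c"] mono2 by blast
    then show ?thesis by (rule rtranclp_trans[OF r5])
  qed (use r1 r2 r3 in \<open>auto simp del: gE.simps\<close>)
qed



definition vis :: "nat list \<Rightarrow> nat set \<Rightarrow> nat" where
  "vis w T = (\<Sum>i<length w - 1. if w!i \<in> T then 1 else 0)"
definition ce :: "nat list \<Rightarrow> nat \<Rightarrow> nat \<Rightarrow> nat" where
  "ce w x y = (\<Sum>i<length w - 1. if (w!i = x \<and> w!Suc i = y) \<or> (w!i = y \<and> w!Suc i = x) then 1 else 0)"
definition cr :: "nat list \<Rightarrow> nat set \<Rightarrow> nat" where
  "cr w T = (\<Sum>i<length w - 1. if (w!i \<in> T) \<noteq> (w!Suc i \<in> T) then 1 else 0)"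

definition closedw :: "nat list \<Rightarrow> bool" where
  "closedw w \<longleftrightarrow> w \<noteq> [] \<and> w!0 = w!(length w - 1)"

lemma shift:
  assumes "closedw w"
  shows "(\<Sum>i<length w - 1. (f (w!Suc i) :: nat)) = (\<Sum>i<length w - 1. f (w!i))"
proof -
  let ?L = "length w - 1"
  have a: "(\<Sum>i<Suc ?L. f (w!i)) = f (w!0) + (\<Sum>i<?L. f (w!Suc i))" by (rule sum.lessThan_Suc_shift)
  have b: "(\<Sum>i<Suc ?L. f (w!i)) = (\<Sum>i<?L. f (w!i)) + f (w!?L)" by simp
  from a b assms show ?thesis unfolding closedw_def by simp
qed

lemma cr_even:
  assumes "closedw w"
  shows "even (cr w T)"
proof -
  let ?L = "length w - 1"
  let ?o = "\<Sum>i<?L. if w!i \<in> T \<and> w!Suc i \<notin> T then 1 else (0::nat)"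
  let ?n = "\<Sum>i<?L. if w!i \<notin> T \<and> w!Suc i \<in> T then 1 else (0::nat)"
  let ?b = "\<Sum>i<?L. if w!i \<in> T \<and> w!Suc i \<in> T then 1 else (0::nat)"
  have h1: "(\<Sum>i<?L. if w!i \<in> T then 1 else (0::nat)) = ?b + ?o"
    unfolding sum.distrib[symmetric] by (rule sum.cong) auto
  have h2: "(\<Sum>i<?L. if w!Suc i \<in> T then 1 else (0::nat)) = ?b + ?n"
    unfolding sum.distrib[symmetric] by (rule sum.cong) auto
  have h3: "(\<Sum>i<?L. if w!Suc i \<in> T then 1 else (0::nat)) = (\<Sum>i<?L. if w!i \<in> T then 1 else (0::nat))"
    using shift[OF assms, of "\<lambda>x. if x \<in> T then 1 else 0"] by simp
  have h4: "cr w T = ?o + ?n"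
    unfolding cr_def sum.distrib[symmetric] by (rule sum.cong) auto
  from h1 h2 h3 h4 have "cr w T = 2 * ?o" by simp
  then show ?thesis by simp
qed

lemma cr_pos:
  assumes "closedw w" "x \<in> set w" "x \<in> T" "y \<in> set w" "y \<notin> T"
  shows "cr w T \<ge> 1"
proof (rule ccontr)
  let ?L = "length w - 1"
  assume "\<not> cr w T \<ge> 1"
  then have "cr w T = 0" by simp
  then have z: "\<forall>i<?L. (w!i \<in> T) = (w!Suc i \<in> T)"
    unfolding cr_def by (simp split: if_splits)
  have all: "\<And>i. i \<le> ?L \<Longrightarrow> (w!i \<in> T) = (w!0 \<in> T)"
  proof -
    fix i show "i \<le> ?L \<Longrightarrow> (w!i \<in> T) = (w!0 \<in> T)"
    proof (induction i)
      case 0 then show ?case by simp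
    next
      case (Suc i) then show ?case using z by simp
    qed
  qed
  obtain j where j: "j < length w" "w!j = x" using assms(2) by (auto simp: in_set_conv_nth)
  obtain j' where j': "j' < length w" "w!j' = y" using assms(4) by (auto simp: in_set_conv_nth)
  have "(x \<in> T) = (y \<in> T)" using all[of j] all[of j'] j j' by simp
  then show False using assms by simp
qed

lemma cr_single:
  assumes "closedw w" "\<forall>i<length w - 1. w!i \<noteq> w!Suc i"
  shows "cr w {x} = 2 * vis w {x}"
proof -
  let ?L = "length w - 1"
  have "cr w {x} = (\<Sum>i<?L. if w!i = x then 1 else 0) + (\<Sum>i<?L. if w!Suc i = x then 1 else (0::nat))"
    unfolding cr_def sum.distrib[symmetric] using assms(2) by (intro sum.cong) auto
  also have "(\<Sum>i<?L. if w!Suc i = x then 1 else (0::nat)) = (\<Sum>i<?L. if w!i = x then 1 else 0)"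
    using shift[OF assms(1), of "\<lambda>y. if y = x then 1 else 0"] by simp
  finally show ?thesis unfolding vis_def by simp
qed

lemma cr_decomp:
  assumes steps: "\<forall>i<length w - 1. E (w!i) (w!Suc i)"
    and sym: "\<forall>a b. E a b \<longrightarrow> E b a"
    and fin: "finite P" and PT: "\<forall>p\<in>P. fst p \<in> T \<and> snd p \<notin> T"
    and cov: "\<forall>a b. E a b \<longrightarrow> a \<in> T \<longrightarrow> b \<notin> T \<longrightarrow> (a,b) \<in> P"
  shows "cr w T = (\<Sum>p\<in>P. ce w (fst p) (snd p))"
proof -
  let ?L = "length w - 1"
  let ?ind = "\<lambda>p i. if (w!i = fst p \<and> w!Suc i = snd p) \<or> (w!i = snd p \<and> w!Suc i = fst p) then 1 else (0::nat)"
  have "(\<Sum>p\<in>P. ce w (fst p) (snd p)) = (\<Sum>p\<in>P. \<Sum>i<?L. ?ind p i)"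
    unfolding ce_def by simp
  also have "\<dots> = (\<Sum>i<?L. \<Sum>p\<in>P. ?ind p i)" by (rule sum.swap)
  also have "\<dots> = cr w T"
    unfolding cr_def
  proof (rule sum.cong)
    fix i assume "i \<in> {..<?L}"
    then have i: "i < ?L" by simp
    define a where "a = w!i"
    define b where "b = w!Suc i"
    have E: "E a b" using steps i a_def b_def by simp
    show "(\<Sum>p\<in>P. ?ind p i) = (if (w!i \<in> T) \<noteq> (w!Suc i \<in> T) then 1 else 0)"
    proof (cases "a \<in> T \<and> b \<notin> T")
      case True
      then have ab: "(a,b) \<in> P" using cov E by blast
      have "\<And>p. p \<in> P \<Longrightarrow> ?ind p i = (if p = (a,b) then 1 else 0)"
        using PT True unfolding a_def[symmetric] b_def[symmetric] by (auto simp: prod_eq_iff)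
      then have "(\<Sum>p\<in>P. ?ind p i) = (\<Sum>p\<in>P. if p = (a,b) then 1 else 0)" by (rule sum.cong[OF refl])
      also have "\<dots> = 1" using ab fin by simp
      finally show ?thesis using True a_def b_def by simp
    next
      case F1: False
      show ?thesis
      proof (cases "a \<notin> T \<and> b \<in> T")
        case True
        then have ab: "(b,a) \<in> P" using cov E sym by blast
        have "\<And>p. p \<in> P \<Longrightarrow> ?ind p i = (if p = (b,a) then 1 else 0)"
          using PT True unfolding a_def[symmetric] b_def[symmetric] by (auto simp: prod_eq_iff)
        then have "(\<Sum>p\<in>P. ?ind p i) = (\<Sum>p\<in>P. if p = (b,a) then 1 else 0)" by (rule sum.cong[OF refl])
        also have "\<dots> = 1" using ab fin by simp
        finally show ?thesis using True a_def b_def by simp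
      next
        case False
        have "\<And>p. p \<in> P \<Longrightarrow> ?ind p i = 0"
          using PT False F1 unfolding a_def[symmetric] b_def[symmetric] by auto
        then have "(\<Sum>p\<in>P. ?ind p i) = 0" by simp
        then show ?thesis using False F1 a_def b_def by auto
      qed
    qed
  qed simp
  finally show ?thesis by simp
qed

lemma ce_sym: "ce w x y = ce w y x"
  unfolding ce_def by (rule sum.cong) auto

lemma vis_union: "A \<inter> B = {} \<Longrightarrow> vis w (A \<union> B) = vis w A + vis w B"
  unfolding vis_def sum.distrib[symmetric] by (rule sum.cong) auto

lemma vis_empty: "vis w {} = 0"
  unfolding vis_def by simp

lemma vis_sum: "finite S \<Longrightarrow> vis w S = (\<Sum>x\<in>S. vis w {x})"
proof (induction S rule: finite_induct)
  case empty then show ?case by (simp add: vis_empty)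
next
  case (insert x F)
  have "vis w (insert x F) = vis w ({x} \<union> F)" by simp
  also have "\<dots> = vis w {x} + vis w F" using insert by (intro vis_union) auto
  finally show ?case using insert by simp
qed

lemma vis_one:
  assumes "closedw w" "2 \<le> length w" "x \<in> set w"
  shows "vis w {x} \<ge> 1"
proof -
  let ?L = "length w - 1"
  obtain j where j: "j < length w" "w!j = x" using assms(3) by (auto simp: in_set_conv_nth)
  obtain i where i: "i < ?L" "w!i = x"
  proof (cases "j < ?L")
    case True then show ?thesis using that j by blast
  next
    case False
    then have "j = ?L" using j by simp
    then have "w!0 = x" using assms(1) j unfolding closedw_def by simp
    then show ?thesis using that[of 0] assms(2) by simp
  qed
  have "(if w!i \<in> {x} then 1 else 0) \<le> (\<Sum>i<?L. if w!i \<in> {x} then 1 else (0::nat))"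
    by (rule member_le_sum) (use i in auto)
  then show ?thesis unfolding vis_def using i by simp
qed

lemma vis_all:
  assumes "set w \<subseteq> V"
  shows "vis w V = length w - 1"
proof -
  have "\<And>i. i < length w - 1 \<Longrightarrow> w!i \<in> V" using assms nth_mem by fastforce
  then show ?thesis unfolding vis_def by simp
qed



definition iface :: "(nat \<Rightarrow> nat \<Rightarrow> bool) \<Rightarrow> nat \<Rightarrow> nat \<Rightarrow> nat \<Rightarrow> nat \<Rightarrow> bool" where
  "iface E k c xu xv \<longleftrightarrow>
     (\<forall>x y. c \<le> x \<and> x < c + gn k \<longrightarrow> (E x y \<longleftrightarrow> gE k c x y \<or> (x = c \<and> y = xu) \<or> (x = c+1 \<and> y = xv))) \<and>
     \<not>(c \<le> xu \<and> xu < c + gn k) \<and> \<not>(c \<le> xv \<and> xv < c + gn k)"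

lemma ev2: "even (x::nat) \<Longrightarrow> x \<ge> 1 \<Longrightarrow> x \<ge> 2" by presburger
lemma arithW:
  fixes A B ts sp tq q1 q2 p1 p2 vt vs vp vq :: nat
  assumes t: "2*vt = A + ts + tq" and s: "2*vs = B + ts + sp" and p: "2*vp = sp + p1 + p2" and q: "2*vq = tq + q1 + q2"
    and "vt \<ge> 1" "vs \<ge> 1" "vp \<ge> 1" "vq \<ge> 1"
    and g1: "even (q1+p1)" "q1+p1 \<ge> 1" and g2: "even (q2+p2)" "q2+p2 \<ge> 1"
    and c1: "even (sp+tq)" "sp+tq \<ge> 1" and c2: "even (A+ts+sp)" "A+ts+sp \<ge> 1"
    and c3: "even (B+ts+tq)" "B+ts+tq\<ge>1"
    and c4: "even (A+B)" "A+B \<ge> 1"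
  shows "vt+vs+vp+vq + (if q1=0 \<or> p1=0 then 1 else 0) + (if q2=0 \<or> p2=0 then 1 else 0) \<ge> (if A=0 \<or> B=0 then 7 else 6)"
proof -
  have G1: "q1+p1 \<ge> 2" using g1 ev2 by blast
  have G2: "q2+p2 \<ge> 2" using g2 ev2 by blast
  have X: "sp+tq \<ge> 2" using c1 ev2 by blast
  have C2: "A+ts+sp \<ge> 2" using c2 ev2 by blast
  have C3: "B+ts+tq \<ge> 2" using c3 ev2 by blast
  have AB: "A+B \<ge> 2" using c4 ev2 by blast
  have H5: "vt+vs+vp+vq \<ge> 5" using t s p q G1 G2 X AB by linarith
  show ?thesis
  proof (cases "vt+vs+vp+vq = 5")
    case True
    then have eq: "A+B = 2" "ts = 0" "sp+tq = 2" "q1+p1 = 2" "q2+p2=2" using t s p q G1 G2 X AB by linarith+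
    have "A \<noteq> 0"
    proof
      assume "A = 0"
      then have "tq \<ge> 2" using t eq \<open>vt \<ge> 1\<close> by linarith
      then show False using C2 eq \<open>A = 0\<close> by linarith
    qed
    moreover have "B \<noteq> 0"
    proof
      assume "B = 0"
      then have "sp \<ge> 2" using s eq \<open>vs \<ge> 1\<close> by linarith
      then show False using C3 eq \<open>B = 0\<close> by linarith
    qed
    moreover have "q1 = 0 \<or> p1 = 0 \<or> q2 = 0 \<or> p2 = 0"
    proof (rule ccontr)
      assume "\<not> ?thesis"
      then have "q1 \<ge> 1" "p1 \<ge> 1" "q2 \<ge> 1" "p2 \<ge> 1" by auto
      then have "q1 = 1" "p1 = 1" "q2 = 1" "p2 = 1" using eq by linarith+
      then have vp2: "2*vp = sp + 2" and vq2: "2*vq = tq + 2" using p q by simp+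
      have "sp \<noteq> 1"
      proof
        assume "sp = 1" then have "2*vp = 3" using vp2 by simp
        then show False by presburger
      qed
      show False
      proof (cases "sp = 0")
        case True
        then have "tq = 2" using eq(3) by simp
        then show False using C2 eq True s \<open>vs \<ge> 1\<close> by linarith
      next
        case False
        then have "sp \<ge> 2" using \<open>sp \<noteq> 1\<close> by simp
        then have "tq = 0" using eq(3) by simp
        then show False using C3 eq t \<open>vt \<ge> 1\<close> \<open>sp \<ge> 2\<close> by linarith
      qed
    qed
    ultimately show ?thesis using True by auto
  next
    case False
    then have H6: "vt+vs+vp+vq \<ge> 6" using H5 by linarith
    show ?thesis
    proof (cases "A = 0 \<or> B = 0")
      case False then show ?thesis using H6 by auto
    next
      case True
      show ?thesis
      proof (cases "vt+vs+vp+vq \<ge> 7")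
        case True then show ?thesis by auto
      next
        case False
        then have H: "vt+vs+vp+vq = 6" using H6 by linarith
        have "q1 = 0 \<or> p1 = 0 \<or> q2 = 0 \<or> p2 = 0"
        proof (rule ccontr)
          assume nz: "\<not> ?thesis"
          show False using True
          proof
            assume A0: "A = 0"
            have "ts + tq \<ge> 2" using t A0 \<open>vt \<ge> 1\<close> by linarith
            have "ts + sp \<ge> 2" using C2 A0 by linarith
            have e: "2*vt+2*vs+2*vp+2*vq = 12" using H by linarith
            have "ts = 1" "sp = 1" "q1+p1 = 2" "q2+p2 = 2"
              using e t s p q G1 G2 X AB A0 \<open>ts + tq \<ge> 2\<close> \<open>ts + sp \<ge> 2\<close> by linarith+
            moreover have "q1 \<ge> 1" "p1 \<ge> 1" "q2 \<ge> 1" "p2 \<ge> 1" using nz by auto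
            ultimately have "p1 = 1" "p2 = 1" by linarith+
            then have "2*vp = 3" using p \<open>sp = 1\<close> by simp
            then show False by presburger
          next
            assume B0: "B = 0"
            have "ts + sp \<ge> 2" using s B0 \<open>vs \<ge> 1\<close> by linarith
            have "ts + tq \<ge> 2" using C3 B0 by linarith
            have e: "2*vt+2*vs+2*vp+2*vq = 12" using H by linarith
            have "ts = 1" "tq = 1" "q1+p1 = 2" "q2+p2 = 2"
              using e t s p q G1 G2 X AB B0 \<open>ts + tq \<ge> 2\<close> \<open>ts + sp \<ge> 2\<close> by linarith+
            moreover have "q1 \<ge> 1" "p1 \<ge> 1" "q2 \<ge> 1" "p2 \<ge> 1" using nz by auto
            ultimately have "q1 = 1" "q2 = 1" by linarith+
            then have "2*vq = 3" using q \<open>tq = 1\<close> by simp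
            then show False by presburger
          qed
        qed
        then show ?thesis using H True by auto
      qed
    qed
  qed
qed

declare gE.simps [simp del]

locale tourctx =
  fixes V :: "nat set" and E :: "nat \<Rightarrow> nat \<Rightarrow> bool" and w :: "nat list"
  assumes tour: "tsp_tour V E w" and sym: "\<forall>a b. E a b \<longrightarrow> E b a" and irr: "\<forall>a. \<not> E a a"
    and len: "2 \<le> length w"
begin

lemma cl: "closedw w"
proof -
  have "w \<noteq> []" "hd w = last w" using tour unfolding tsp_tour_def is_walk_def by auto
  then show ?thesis unfolding closedw_def by (simp add: hd_conv_nth last_conv_nth)
qed

lemma steps: "\<forall>i<length w - 1. E (w!i) (w!Suc i)"
  using tour unfolding tsp_tour_def is_walk_def by auto

lemma noloop: "\<forall>i<length w - 1. w!i \<noteq> w!Suc i"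
  using steps irr by metis

lemma setw: "set w = V"
  using tour unfolding tsp_tour_def by auto

lemma crpos: "x \<in> V \<Longrightarrow> x \<in> T \<Longrightarrow> y \<in> V \<Longrightarrow> y \<notin> T \<Longrightarrow> cr w T \<ge> 1"
  using cr_pos[OF cl] setw by blast

lemma creven: "even (cr w T)"
  by (rule cr_even[OF cl])

lemma cut2:
  assumes "a1 \<in> T" "b1 \<notin> T" "a2 \<in> T" "b2 \<notin> T" "(a1,b1) \<noteq> (a2,b2)"
    and "\<forall>a b. E a b \<longrightarrow> a \<in> T \<longrightarrow> b \<notin> T \<longrightarrow> (a,b) = (a1,b1) \<or> (a,b) = (a2,b2)"
  shows "cr w T = ce w a1 b1 + ce w a2 b2"
proof -
  have "cr w T = (\<Sum>p\<in>{(a1,b1),(a2,b2)}. ce w (fst p) (snd p))"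
    by (rule cr_decomp[OF steps sym]) (use assms in auto)
  then show ?thesis using assms(5) by simp
qed

lemma cut3:
  assumes "a1 \<in> T" "b1 \<notin> T" "a2 \<in> T" "b2 \<notin> T" "a3 \<in> T" "b3 \<notin> T"
    "(a1,b1) \<noteq> (a2,b2)" "(a1,b1) \<noteq> (a3,b3)" "(a2,b2) \<noteq> (a3,b3)"
    and "\<forall>a b. E a b \<longrightarrow> a \<in> T \<longrightarrow> b \<notin> T \<longrightarrow> (a,b) = (a1,b1) \<or> (a,b) = (a2,b2) \<or> (a,b) = (a3,b3)"
  shows "cr w T = ce w a1 b1 + ce w a2 b2 + ce w a3 b3"
proof -
  have "cr w T = (\<Sum>p\<in>{(a1,b1),(a2,b2),(a3,b3)}. ce w (fst p) (snd p))"
    by (rule cr_decomp[OF steps sym]) (use assms in auto)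
  then show ?thesis using assms(7-9) by (simp add: add.assoc)
qed

lemma deg3:
  assumes "x \<noteq> y1" "x \<noteq> y2" "x \<noteq> y3" "y1 \<noteq> y2" "y1 \<noteq> y3" "y2 \<noteq> y3"
    and "\<forall>b. E x b \<longrightarrow> b = y1 \<or> b = y2 \<or> b = y3"
  shows "2 * vis w {x} = ce w x y1 + ce w x y2 + ce w x y3"
proof -
  have "cr w {x} = ce w x y1 + ce w x y2 + ce w x y3"
    by (rule cut3) (use assms in auto)
  then show ?thesis using cr_single[OF cl noloop] by simp
qed

lemma vis_ge_card:
  assumes "finite S" "S \<subseteq> V"
  shows "card S \<le> vis w S"
proof -
  have "card S = (\<Sum>x\<in>S. 1)" by simp
  also have "\<dots> \<le> (\<Sum>x\<in>S. vis w {x})"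
    by (rule sum_mono) (use assms vis_one[OF cl len] setw in auto)
  also have "\<dots> = vis w S" using vis_sum[OF assms(1)] by simp
  finally show ?thesis .
qed

lemma vis_split: "x \<in> S \<Longrightarrow> vis w S = vis w {x} + vis w (S - {x})"
proof -
  assume "x \<in> S"
  then have "S = {x} \<union> (S - {x})" by auto
  then show ?thesis using vis_union[of "{x}" "S - {x}" w] by (metis Diff_disjoint)
qed

lemma base_case:
  assumes ifc: "iface E 0 c xu xv" and SV: "{c..<c+gn 0} \<subseteq> V" and xuV: "xu \<in> V"
  shows "gn 0 + gm 0 \<le> vis w {c..<c+gn 0} \<and> ((ce w c xu = 0 \<or> ce w (c+1) xv = 0) \<longrightarrow> gn 0 + gm 0 + 1 \<le> vis w {c..<c+gn 0})"
proof -
  let ?S = "{c..<c+6}"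
  have Eiff: "\<And>x y. c \<le> x \<Longrightarrow> x < c+6 \<Longrightarrow> E x y \<longleftrightarrow> gE 0 c x y \<or> (x = c \<and> y = xu) \<or> (x = c+1 \<and> y = xv)"
    using ifc unfolding iface_def by auto
  have xu: "\<not>(c \<le> xu \<and> xu < c+6)" and xv: "\<not>(c \<le> xv \<and> xv < c+6)" using ifc unfolding iface_def by auto
  have SV': "?S \<subseteq> V" using SV by simp
  have v6: "6 \<le> vis w ?S" using vis_ge_card[of ?S] SV' by simp
  have crS: "cr w ?S = ce w c xu + ce w (c+1) xv"
    by (rule cut2) (use xu xv Eiff gE.simps(1) in auto)
  have crS1: "cr w ?S \<ge> 1" by (rule crpos[of c _ xu]) (use SV' xuV xu in auto)
  have crSe: "even (cr w ?S)" by (rule creven)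
  have "ce w c xu = 0 \<or> ce w (c+1) xv = 0 \<longrightarrow> 7 \<le> vis w ?S"
  proof
    assume z: "ce w c xu = 0 \<or> ce w (c+1) xv = 0"
    show "7 \<le> vis w ?S"
    proof (cases "ce w (c+1) xv = 0")
      case True
      then have a2: "ce w c xu \<ge> 2" using crS crS1 crSe by presburger
      have crT: "cr w {c+1..<c+6} = ce w (c+3) c + ce w (c+5) c + ce w (c+1) xv"
        by (rule cut3) (use xu xv Eiff gE.simps(1) in auto)
      have crT1: "cr w {c+1..<c+6} \<ge> 1" by (rule crpos[of "c+1" _ c]) (use SV' in auto)
      have dg: "2 * vis w {c} = ce w c (c+3) + ce w c (c+5) + ce w c xu"
        by (rule deg3) (use xu Eiff gE.simps(1) in auto)
      have "vis w {c} \<ge> 2" using dg crT crT1 a2 True ce_sym[of w c "c+3"] ce_sym[of w c "c+5"] by linarith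
      moreover have "5 \<le> vis w (?S - {c})" using vis_ge_card[of "?S - {c}"] SV' by auto
      moreover have "vis w ?S = vis w {c} + vis w (?S - {c})" by (rule vis_split) simp
      ultimately show ?thesis by linarith
    next
      case False
      then have T: "ce w c xu = 0" using z by simp
      then have a2: "ce w (c+1) xv \<ge> 2" using crS crS1 crSe by presburger
      have crT: "cr w (?S - {c+1}) = ce w (c+2) (c+1) + ce w (c+4) (c+1) + ce w c xu"
        by (rule cut3) (use xu xv Eiff gE.simps(1) in auto)
      have crT1: "cr w (?S - {c+1}) \<ge> 1" by (rule crpos[of c _ "c+1"]) (use SV' in auto)
      have dg: "2 * vis w {c+1} = ce w (c+1) (c+2) + ce w (c+1) (c+4) + ce w (c+1) xv"
        by (rule deg3) (use xv Eiff gE.simps(1) in auto)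
      have "vis w {c+1} \<ge> 2" using dg crT crT1 a2 T ce_sym[of w "c+1" "c+2"] ce_sym[of w "c+1" "c+4"] by linarith
      moreover have "5 \<le> vis w (?S - {c+1})" using vis_ge_card[of "?S - {c+1}"] SV' by auto
      moreover have "vis w ?S = vis w {c+1} + vis w (?S - {c+1})" by (rule vis_split) simp
      ultimately show ?thesis by linarith
    qed
  qed
  then show ?thesis using v6 by simp
qed

lemma step_case:
  assumes IH: "\<And>c xu xv. iface E k c xu xv \<Longrightarrow> {c..<c+gn k} \<subseteq> V \<Longrightarrow> xu \<in> V \<Longrightarrow>
      gn k + gm k \<le> vis w {c..<c+gn k} \<and> ((ce w c xu = 0 \<or> ce w (c+1) xv = 0) \<longrightarrow> gn k + gm k + 1 \<le> vis w {c..<c+gn k})"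
    and ifc: "iface E (Suc k) c xu xv" and SV: "{c..<c+gn (Suc k)} \<subseteq> V" and xuV: "xu \<in> V"
  shows "gn (Suc k) + gm (Suc k) \<le> vis w {c..<c+gn (Suc k)} \<and> ((ce w c xu = 0 \<or> ce w (c+1) xv = 0) \<longrightarrow> gn (Suc k) + gm (Suc k) + 1 \<le> vis w {c..<c+gn (Suc k)})"
proof -
  define n where "n = gn k"
  define m where "m = gm k"
  have n6: "n \<ge> 6" unfolding n_def by (rule gn_ge)
  have gnS: "gn (Suc k) = 2*n+4" unfolding n_def by simp
  have gmS: "gm (Suc k) = 2*m+2" unfolding m_def by simp
  let ?S = "{c..<c+2*n+4}"
  have SV': "?S \<subseteq> V" using SV gnS by (simp add: add.assoc)
  have Eiff: "\<And>x y. c \<le> x \<Longrightarrow> x < c+2*n+4 \<Longrightarrow> E x y \<longleftrightarrow> gE (Suc k) c x y \<or> (x = c \<and> y = xu) \<or> (x = c+1 \<and> y = xv)"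
    using ifc gnS unfolding iface_def by (auto simp: add.assoc)
  have xu: "\<not>(c \<le> xu \<and> xu < c+2*n+4)" and xv: "\<not>(c \<le> xv \<and> xv < c+2*n+4)"
    using ifc gnS unfolding iface_def by (auto simp: add.assoc)
  have rng: "\<And>a b. gE (Suc k) c a b \<Longrightarrow> c \<le> b \<and> b < c+2*n+4"
    using gE_range gnS by (metis add.assoc)
  have EF: "\<And>a b. E a b \<Longrightarrow> c \<le> a \<Longrightarrow> a < c+2*n+4 \<Longrightarrow>
      (gE (Suc k) c a b \<and> c \<le> b \<and> b < c+2*n+4) \<or> (a = c \<and> b = xu) \<or> (a = c+1 \<and> b = xv)"
    using Eiff rng by blast
  have H0: "\<And>b. gE (Suc k) c c b \<longleftrightarrow> b = c+1 \<or> b = c+3" by (rule gE_Suc_hub(1))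
  have H1: "\<And>b. gE (Suc k) c (c+1) b \<longleftrightarrow> b = c \<or> b = c+2" by (rule gE_Suc_hub(2))
  have H2: "\<And>b. gE (Suc k) c (c+2) b \<longleftrightarrow> b = c+1 \<or> b = c+5 \<or> b = c+5+n" unfolding n_def by (rule gE_Suc_hub(3))
  have H3: "\<And>b. gE (Suc k) c (c+3) b \<longleftrightarrow> b = c \<or> b = c+4 \<or> b = c+4+n" unfolding n_def by (rule gE_Suc_hub(4))
  have B0: "\<And>a. gE (Suc k) c a c \<Longrightarrow> a = c+1 \<or> a = c+3" using H0 gE_sym by metis
  have B1: "\<And>a. gE (Suc k) c a (c+1) \<Longrightarrow> a = c \<or> a = c+2" using H1 gE_sym by metis
  have C1: "\<And>a b. c+4 \<le> a \<Longrightarrow> a < c+4+n \<Longrightarrow> gE (Suc k) c a b \<longleftrightarrow> gE k (c+4) a b \<or> (a = c+4 \<and> b = c+3) \<or> (a = c+5 \<and> b = c+2)"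
    unfolding n_def by (rule gE_Suc_c1)
  have C2: "\<And>a b. c+4+n \<le> a \<Longrightarrow> a < c+4+n+n \<Longrightarrow> gE (Suc k) c a b \<longleftrightarrow> gE k (c+4+n) a b \<or> (a = c+4+n \<and> b = c+3) \<or> (a = c+5+n \<and> b = c+2)"
    unfolding n_def by (rule gE_Suc_c2)
  have R1: "\<And>a b. gE k (c+4) a b \<Longrightarrow> c+4 \<le> b \<and> b < c+4+n" using gE_range n_def by blast
  have R2: "\<And>a b. gE k (c+4+n) a b \<Longrightarrow> c+4+n \<le> b \<and> b < c+4+n+n" using gE_range n_def by blast
  have ifc1: "iface E k (c+4) (c+3) (c+2)"
    unfolding iface_def n_def[symmetric]
  proof (intro conjI allI impI)
    fix x y assume x: "c+4 \<le> x \<and> x < c+4+n"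
    then show "E x y \<longleftrightarrow> gE k (c+4) x y \<or> (x = c+4 \<and> y = c+3) \<or> (x = c+4+1 \<and> y = c+2)"
      using Eiff[of x y] C1[of x y] by auto
  qed auto
  have ifc2: "iface E k (c+4+n) (c+3) (c+2)"
    unfolding iface_def n_def[symmetric]
  proof (intro conjI allI impI)
    fix x y assume x: "c+4+n \<le> x \<and> x < c+4+n+n"
    then show "E x y \<longleftrightarrow> gE k (c+4+n) x y \<or> (x = c+4+n \<and> y = c+3) \<or> (x = c+4+n+1 \<and> y = c+2)"
      using Eiff[of x y] C2[of x y] by auto
  qed auto
  have V1: "{c+4..<c+4+n} \<subseteq> V" using SV' by auto
  have V2: "{c+4+n..<c+4+n+n} \<subseteq> V" using SV' by auto
  have c3V: "c+3 \<in> V" using SV' by auto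
  have V1': "{c+4..<c+4+gn k} \<subseteq> V" using V1 n_def by simp
  have V2': "{c+4+gn k..<c+4+gn k+gn k} \<subseteq> V" using V2 n_def by simp
  have e5: "c+4+1 = c+5" by simp
  have e5n: "c+4+n+1 = c+5+n" by simp
  have I1: "n + m \<le> vis w {c+4..<c+4+n} \<and> ((ce w (c+4) (c+3) = 0 \<or> ce w (c+4+1) (c+2) = 0) \<longrightarrow> n + m + 1 \<le> vis w {c+4..<c+4+n})"
    unfolding n_def m_def by (rule IH[OF ifc1[unfolded n_def] V1' c3V])
  have I2: "n + m \<le> vis w {c+4+n..<c+4+n+n} \<and> ((ce w (c+4+n) (c+3) = 0 \<or> ce w (c+4+n+1) (c+2) = 0) \<longrightarrow> n + m + 1 \<le> vis w {c+4+n..<c+4+n+n})"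
    unfolding n_def m_def by (rule IH[OF ifc2[unfolded n_def] V2' c3V])
  have dt: "2 * vis w {c} = ce w c xu + ce w c (c+1) + ce w c (c+3)"
    by (rule deg3) (use xu Eiff H0 in auto)
  have ds: "2 * vis w {c+1} = ce w (c+1) xv + ce w (c+1) c + ce w (c+1) (c+2)"
    by (rule deg3) (use xv Eiff H1 in auto)
  have dp: "2 * vis w {c+2} = ce w (c+2) (c+1) + ce w (c+2) (c+5) + ce w (c+2) (c+5+n)"
    by (rule deg3) (use n6 Eiff H2 in auto)
  have dq: "2 * vis w {c+3} = ce w (c+3) c + ce w (c+3) (c+4) + ce w (c+3) (c+4+n)"
    by (rule deg3) (use n6 Eiff H3 in auto)
  have cS: "cr w ?S = ce w c xu + ce w (c+1) xv"
    by (rule cut2) (use xu xv EF in auto)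
  have cS1: "cr w {c+4..<c+4+n} = ce w (c+4) (c+3) + ce w (c+5) (c+2)"
  proof (rule cut2)
    show "\<forall>a b. E a b \<longrightarrow> a \<in> {c+4..<c+4+n} \<longrightarrow> b \<notin> {c+4..<c+4+n} \<longrightarrow> (a, b) = (c+4, c+3) \<or> (a, b) = (c+5, c+2)"
    proof (intro allI impI)
      fix a b assume "E a b" "a \<in> {c+4..<c+4+n}" "b \<notin> {c+4..<c+4+n}"
      then show "(a, b) = (c+4, c+3) \<or> (a, b) = (c+5, c+2)"
        using EF[of a b] C1[of a b] R1[of a b] by auto
    qed
  qed (use n6 in auto)
  have cS2: "cr w {c+4+n..<c+4+n+n} = ce w (c+4+n) (c+3) + ce w (c+5+n) (c+2)"
  proof (rule cut2)
    show "\<forall>a b. E a b \<longrightarrow> a \<in> {c+4+n..<c+4+n+n} \<longrightarrow> b \<notin> {c+4+n..<c+4+n+n} \<longrightarrow> (a, b) = (c+4+n, c+3) \<or> (a, b) = (c+5+n, c+2)"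
    proof (intro allI impI)
      fix a b assume "E a b" "a \<in> {c+4+n..<c+4+n+n}" "b \<notin> {c+4+n..<c+4+n+n}"
      then show "(a, b) = (c+4+n, c+3) \<or> (a, b) = (c+5+n, c+2)"
        using EF[of a b] C2[of a b] R2[of a b] by auto
    qed
  qed (use n6 in auto)
  have cT1: "cr w {c+2..<c+2*n+4} = ce w (c+2) (c+1) + ce w (c+3) c"
  proof (rule cut2)
    show "\<forall>a b. E a b \<longrightarrow> a \<in> {c+2..<c+2*n+4} \<longrightarrow> b \<notin> {c+2..<c+2*n+4} \<longrightarrow> (a, b) = (c+2, c+1) \<or> (a, b) = (c+3, c)"
    proof (intro allI impI)
      fix a b assume H: "E a b" "a \<in> {c+2..<c+2*n+4}" "b \<notin> {c+2..<c+2*n+4}"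
      have g: "gE (Suc k) c a b" "c \<le> b" "b < c+2*n+4" using EF[OF H(1)] H(2) by auto
      then have "b = c \<or> b = c+1" using H(3) by auto
      then show "(a, b) = (c+2, c+1) \<or> (a, b) = (c+3, c)"
      proof
        assume "b = c" then show ?thesis using B0[of a] g H(2) by auto
      next
        assume "b = c+1" then show ?thesis using B1[of a] g H(2) by auto
      qed
    qed
  qed (use n6 in auto)
  have cT2: "cr w (?S - {c+1}) = ce w c xu + ce w c (c+1) + ce w (c+2) (c+1)"
  proof (rule cut3)
    show "\<forall>a b. E a b \<longrightarrow> a \<in> ?S - {c+1} \<longrightarrow> b \<notin> ?S - {c+1} \<longrightarrow> (a, b) = (c, xu) \<or> (a, b) = (c, c+1) \<or> (a, b) = (c+2, c+1)"
    proof (intro allI impI)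
      fix a b assume "E a b" "a \<in> ?S - {c+1}" "b \<notin> ?S - {c+1}"
      then show "(a, b) = (c, xu) \<or> (a, b) = (c, c+1) \<or> (a, b) = (c+2, c+1)"
        using EF[of a b] B1[of a] by auto
    qed
  qed (use n6 xu in auto)
  have cT3: "cr w (?S - {c}) = ce w (c+1) xv + ce w (c+1) c + ce w (c+3) c"
  proof (rule cut3)
    show "\<forall>a b. E a b \<longrightarrow> a \<in> ?S - {c} \<longrightarrow> b \<notin> ?S - {c} \<longrightarrow> (a, b) = (c+1, xv) \<or> (a, b) = (c+1, c) \<or> (a, b) = (c+3, c)"
    proof (intro allI impI)
      fix a b assume "E a b" "a \<in> ?S - {c}" "b \<notin> ?S - {c}"
      then show "(a, b) = (c+1, xv) \<or> (a, b) = (c+1, c) \<or> (a, b) = (c+3, c)"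
        using EF[of a b] B0[of a] by auto
    qed
  qed (use n6 xv in auto)
  have pS: "cr w ?S \<ge> 1" by (rule crpos[of c _ xu]) (use SV' xuV xu in auto)
  have pS1: "cr w {c+4..<c+4+n} \<ge> 1" by (rule crpos[of "c+4" _ c]) (use SV' n6 in auto)
  have pS2: "cr w {c+4+n..<c+4+n+n} \<ge> 1" by (rule crpos[of "c+4+n" _ c]) (use SV' n6 in auto)
  have pT1: "cr w {c+2..<c+2*n+4} \<ge> 1" by (rule crpos[of "c+2" _ c]) (use SV' n6 in auto)
  have pT2: "cr w (?S - {c+1}) \<ge> 1" by (rule crpos[of c _ "c+1"]) (use SV' n6 in auto)
  have pT3: "cr w (?S - {c}) \<ge> 1" by (rule crpos[of "c+1" _ c]) (use SV' n6 in auto)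
  have vt: "vis w {c} \<ge> 1" and vs: "vis w {c+1} \<ge> 1" and vp: "vis w {c+2} \<ge> 1" and vq: "vis w {c+3} \<ge> 1"
  proof -
    have "c \<in> V" "c+1 \<in> V" "c+2 \<in> V" "c+3 \<in> V" using SV' by auto
    then show "vis w {c} \<ge> 1" "vis w {c+1} \<ge> 1" "vis w {c+2} \<ge> 1" "vis w {c+3} \<ge> 1"
      using vis_one[OF cl len] setw by auto
  qed
  have vdec: "vis w ?S = vis w {c} + vis w {c+1} + vis w {c+2} + vis w {c+3} + vis w {c+4..<c+4+n} + vis w {c+4+n..<c+4+n+n}"
  proof -
    have e: "?S = {c} \<union> ({c+1} \<union> ({c+2} \<union> ({c+3} \<union> ({c+4..<c+4+n} \<union> {c+4+n..<c+4+n+n}))))" by auto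
    show ?thesis unfolding e by (subst vis_union, force)+ (simp add: add.assoc)
  qed
  have ar: "vis w {c} + vis w {c+1} + vis w {c+2} + vis w {c+3}
      + (if ce w (c+4) (c+3) = 0 \<or> ce w (c+5) (c+2) = 0 then 1 else 0)
      + (if ce w (c+4+n) (c+3) = 0 \<or> ce w (c+5+n) (c+2) = 0 then 1 else 0)
      \<ge> (if ce w c xu = 0 \<or> ce w (c+1) xv = 0 then 7 else 6)"
  proof (rule arithW)
    show "2 * vis w {c} = ce w c xu + ce w c (c+1) + ce w (c+3) c" using dt ce_sym[of w c "c+3"] by simp
    show "2 * vis w {c+1} = ce w (c+1) xv + ce w c (c+1) + ce w (c+1) (c+2)" using ds ce_sym[of w c "c+1"] by simp
    show "2 * vis w {c+2} = ce w (c+1) (c+2) + ce w (c+5) (c+2) + ce w (c+5+n) (c+2)"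
      using dp ce_sym[of w "c+2" "c+1"] ce_sym[of w "c+2" "c+5"] ce_sym[of w "c+2" "c+5+n"] by simp
    show "2 * vis w {c+3} = ce w (c+3) c + ce w (c+4) (c+3) + ce w (c+4+n) (c+3)"
      using dq ce_sym[of w "c+3" "c+4"] ce_sym[of w "c+3" "c+4+n"] by simp
    show "even (ce w (c+4) (c+3) + ce w (c+5) (c+2))" using creven cS1 by metis
    show "even (ce w (c+4+n) (c+3) + ce w (c+5+n) (c+2))" using creven cS2 by metis
    show "even (ce w (c+1) (c+2) + ce w (c+3) c)" using creven cT1 ce_sym[of w "c+2" "c+1"] by metis
    show "even (ce w c xu + ce w c (c+1) + ce w (c+1) (c+2))" using creven cT2 ce_sym[of w "c+2" "c+1"] by metis
    show "even (ce w (c+1) xv + ce w c (c+1) + ce w (c+3) c)" using creven cT3 ce_sym[of w "c+1" c] by metis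
    show "even (ce w c xu + ce w (c+1) xv)" using creven cS by metis
    show "ce w (c+4) (c+3) + ce w (c+5) (c+2) \<ge> 1" using pS1 cS1 by simp
    show "ce w (c+4+n) (c+3) + ce w (c+5+n) (c+2) \<ge> 1" using pS2 cS2 by simp
    show "ce w (c+1) (c+2) + ce w (c+3) c \<ge> 1" using pT1 cT1 ce_sym[of w "c+2" "c+1"] by simp
    show "ce w c xu + ce w c (c+1) + ce w (c+1) (c+2) \<ge> 1" using pT2 cT2 ce_sym[of w "c+2" "c+1"] by simp
    show "ce w (c+1) xv + ce w c (c+1) + ce w (c+3) c \<ge> 1" using pT3 cT3 ce_sym[of w "c+1" c] by simp
    show "ce w c xu + ce w (c+1) xv \<ge> 1" using pS cS by simp
  qed (use vt vs vp vq in auto)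
  have main: "vis w ?S \<ge> 2*n+4 + (2*m+2) + (if ce w c xu = 0 \<or> ce w (c+1) xv = 0 then 1 else 0)"
  proof -
    let ?b1 = "(if ce w (c+4) (c+3) = 0 \<or> ce w (c+5) (c+2) = 0 then 1 else 0::nat)"
    let ?b2 = "(if ce w (c+4+n) (c+3) = 0 \<or> ce w (c+5+n) (c+2) = 0 then 1 else 0::nat)"
    have a1: "vis w {c+4..<c+4+n} \<ge> n + m + ?b1" using I1[unfolded e5] by auto
    have a2: "vis w {c+4+n..<c+4+n+n} \<ge> n + m + ?b2" using I2[unfolded e5n] by auto
    show ?thesis using ar a1 a2 vdec by (auto split: if_splits)
  qed
  show ?thesis using main gnS gmS by (auto simp: add.assoc split: if_splits)
qed

end


lemma (in tourctx) gadget: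
  "iface E k c xu xv \<Longrightarrow> {c..<c+gn k} \<subseteq> V \<Longrightarrow> xu \<in> V \<Longrightarrow>
   gn k + gm k \<le> vis w {c..<c+gn k} \<and> ((ce w c xu = 0 \<or> ce w (c+1) xv = 0) \<longrightarrow> gn k + gm k + 1 \<le> vis w {c..<c+gn k})"
proof (induction k arbitrary: c xu xv)
  case 0 then show ?case using base_case by blast
next
  case (Suc k)
  show ?case by (rule step_case[OF Suc.IH Suc.prems])
qed

definition fV :: "nat \<Rightarrow> nat set" where "fV k = {..<2 * gn k}"
definition fE :: "nat \<Rightarrow> nat \<Rightarrow> nat \<Rightarrow> bool" where
  "fE k x y \<longleftrightarrow> gE k 0 x y \<or> gE k (gn k) x y \<or> (x = 0 \<and> y = gn k + 1) \<or> (x = gn k + 1 \<and> y = 0) \<or>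
     (x = 1 \<and> y = gn k) \<or> (x = gn k \<and> y = 1)"

lemma rt_walk:
  assumes "r\<^sup>*\<^sup>* x y" "x \<in> V" "\<forall>a b. r a b \<longrightarrow> a \<in> V \<and> b \<in> V"
  shows "\<exists>w. is_walk V r w \<and> hd w = x \<and> last w = y"
  using assms(1)
proof (induction rule: rtranclp_induct)
  case base
  have "is_walk V r [x]" unfolding is_walk_def using assms(2) by auto
  then show ?case by force
next
  case (step y z)
  obtain w where w: "is_walk V r w" "hd w = x" "last w = y" using step.IH by blast
  have ne: "w \<noteq> []" using w(1) unfolding is_walk_def by simp
  have zV: "z \<in> V" using step.hyps(2) assms(3) by blast
  have "is_walk V r (w @ [z])"
    unfolding is_walk_def
  proof (intro conjI allI impI)
    show "w @ [z] \<noteq> []" by simp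
    show "set (w @ [z]) \<subseteq> V" using w(1) zV unfolding is_walk_def by auto
  next
    fix i assume i: "Suc i < length (w @ [z])"
    show "r ((w @ [z]) ! i) ((w @ [z]) ! Suc i)"
    proof (cases "Suc i < length w")
      case True
      then show ?thesis using w(1) unfolding is_walk_def by (simp add: nth_append)
    next
      case False
      then have "Suc i = length w" using i by simp
      then have ii: "i = length w - 1" by simp
      have "(w @ [z]) ! i = last w" "(w @ [z]) ! Suc i = z"
        using ne \<open>Suc i = length w\<close> by (auto simp: nth_append last_conv_nth ii)
      then show ?thesis using w(3) step.hyps(2) by simp
    qed
  qed
  moreover have "hd (w @ [z]) = x" using w(2) ne by simp
  moreover have "last (w @ [z]) = z" by simp
  ultimately show ?case by blast
qed

lemma sym_rt: "\<forall>a b. r a b \<longrightarrow> r b a \<Longrightarrow> r\<^sup>*\<^sup>* x y \<Longrightarrow> r\<^sup>*\<^sup>* y x"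
proof -
  assume s: "\<forall>a b. r a b \<longrightarrow> r b a" and h: "r\<^sup>*\<^sup>* x y"
  from h show "r\<^sup>*\<^sup>* y x"
  proof (induction rule: rtranclp_induct)
    case base then show ?case by simp
  next
    case (step y z)
    then show ?case using s by (meson converse_rtranclp_into_rtranclp)
  qed
qed

context
  fixes k :: nat
begin


lemma fE_range: "fE k x y \<Longrightarrow> x \<in> fV k \<and> y \<in> fV k"
  using gE_range[of k 0 x y] gE_range[of k "gn k" x y] gn_ge[of k] unfolding fE_def fV_def by auto

lemma fE_sym: "fE k x y \<Longrightarrow> fE k y x"
  unfolding fE_def using gE_sym by blast

lemma fE_irr: "\<not> fE k x x"
  unfolding fE_def using gE_irr gn_ge[of k] by auto

lemma simple: "simple_graph (fV k) (fE k)"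
  unfolding simple_graph_def using fE_range fE_sym fE_irr by (auto simp: fV_def)

lemma bip: "bipartite (fV k) (fE k)"
  unfolding bipartite_def
proof (intro exI conjI allI impI)
  show "{x \<in> fV k. even x} \<union> {x \<in> fV k. odd x} = fV k" by auto
  show "{x \<in> fV k. even x} \<inter> {x \<in> fV k. odd x} = {}" by auto
next
  fix x y assume e: "fE k x y"
  have ev: "even (gn k)" by (rule gn_even)
  have "even x \<longleftrightarrow> odd y"
    using e gE_par[of 0 k x y] gE_par[of "gn k" k x y] ev unfolding fE_def by auto
  then show "x \<in> {x \<in> fV k. even x} \<and> y \<in> {x \<in> fV k. odd x} \<or> x \<in> {x \<in> fV k. odd x} \<and> y \<in> {x \<in> fV k. even x}"
    using fE_range[OF e] by auto
qed

lemma cub: "cubic (fV k) (fE k)"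
  unfolding cubic_def
proof
  fix x assume x: "x \<in> fV k"
  have n6: "gn k \<ge> 6" by (rule gn_ge)
  show "card {y. fE k x y} = 3"
  proof (cases "x < gn k")
    case True
    have nb: "gn k \<notin> {y. gE k 0 x y}" "gn k + 1 \<notin> {y. gE k 0 x y}" using gE_hi2[of 0 k] by auto
    have eq: "{y. fE k x y} = {y. gE k 0 x y} \<union> {y. (x = 0 \<and> y = gn k + 1) \<or> (x = 1 \<and> y = gn k)}"
      using True gE_range[of k "gn k" x] unfolding fE_def by auto
    have d: "card {y. gE k 0 x y} = (if x = 0 \<or> x = 1 then 2 else 3)" using gE_deg[of 0 x k] True by simp
    show ?thesis
    proof (cases "x = 0")
      case True
      then have "{y. fE k x y} = insert (gn k + 1) {y. gE k 0 x y}" using eq by auto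
      then show ?thesis using d nb True gE_fin by simp
    next
      case F: False
      show ?thesis
      proof (cases "x = 1")
        case True
        then have "{y. fE k x y} = insert (gn k) {y. gE k 0 x y}" using eq by auto
        then show ?thesis using d nb True gE_fin by simp
      next
        case False
        then have "{y. fE k x y} = {y. gE k 0 x y}" using eq F by auto
        then show ?thesis using d F False by simp
      qed
    qed
  next
    case False
    have x2: "x < gn k + gn k" using x unfolding fV_def by simp
    have nb: "0 \<notin> {y. gE k (gn k) x y}" "1 \<notin> {y. gE k (gn k) x y}" using gE_lo2[of _ "gn k" k] n6 by auto
    have eq: "{y. fE k x y} = {y. gE k (gn k) x y} \<union> {y. (x = gn k + 1 \<and> y = 0) \<or> (x = gn k \<and> y = 1)}"
      using False gE_range[of k 0 x] unfolding fE_def by auto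
    have d: "card {y. gE k (gn k) x y} = (if x = gn k \<or> x = gn k + 1 then 2 else 3)"
      using gE_deg[of "gn k" x k] False x2 by simp
    show ?thesis
    proof (cases "x = gn k + 1")
      case True
      then have "{y. fE k x y} = insert 0 {y. gE k (gn k) x y}" using eq by auto
      then show ?thesis using d nb True gE_fin by simp
    next
      case F: False
      show ?thesis
      proof (cases "x = gn k")
        case True
        then have "{y. fE k x y} = insert 1 {y. gE k (gn k) x y}" using eq by auto
        then show ?thesis using d nb True gE_fin by simp
      next
        case False
        then have "{y. fE k x y} = {y. gE k (gn k) x y}" using eq F by auto
        then show ?thesis using d F False by simp
      qed
    qed
  qed
qed

lemma reach0: "x \<in> fV k \<Longrightarrow> (fE k)\<^sup>*\<^sup>* 0 x"
proof -
  assume x: "x \<in> fV k"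
  have n6: "gn k \<ge> 6" by (rule gn_ge)
  have m1: "\<And>a b. gE k 0 a b \<Longrightarrow> fE k a b" unfolding fE_def by simp
  have m2: "\<And>a b. gE k (gn k) a b \<Longrightarrow> fE k a b" unfolding fE_def by simp
  have l1: "\<And>y. y < gn k \<Longrightarrow> (fE k)\<^sup>*\<^sup>* 0 y"
  proof -
    fix y assume "y < gn k"
    then have "(gE k 0)\<^sup>*\<^sup>* 0 y" using gE_conn[of 0 y k] by simp
    then show "(fE k)\<^sup>*\<^sup>* 0 y" using mono_rtranclp[of "gE k 0" "fE k"] m1 by blast
  qed
  show "(fE k)\<^sup>*\<^sup>* 0 x"
  proof (cases "x < gn k")
    case True then show ?thesis using l1 by blast
  next
    case False
    have "(gE k (gn k))\<^sup>*\<^sup>* (gn k) x" using gE_conn[of "gn k" x k] False x unfolding fV_def by simp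
    then have a: "(fE k)\<^sup>*\<^sup>* (gn k) x" using mono_rtranclp[of "gE k (gn k)" "fE k"] m2 by blast
    have "(fE k)\<^sup>*\<^sup>* 0 1" using l1 n6 by simp
    moreover have "fE k 1 (gn k)" unfolding fE_def by simp
    ultimately have "(fE k)\<^sup>*\<^sup>* 0 (gn k)" by (meson rtranclp.rtrancl_into_rtrancl)
    then show ?thesis using a by (rule rtranclp_trans)
  qed
qed

lemma conn: "connected_graph (fV k) (fE k)"
  unfolding connected_graph_def
proof (intro conjI ballI)
  have "0 \<in> fV k" unfolding fV_def using gn_ge[of k] by simp
  then show "fV k \<noteq> {}" by auto
next
  fix x y assume x: "x \<in> fV k" and y: "y \<in> fV k"
  have "(fE k)\<^sup>*\<^sup>* x 0" using sym_rt[of "fE k"] reach0[OF x] fE_sym by blast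
  then have "(fE k)\<^sup>*\<^sup>* x y" using reach0[OF y] by (rule rtranclp_trans)
  then show "\<exists>w. is_walk (fV k) (fE k) w \<and> hd w = x \<and> last w = y"
    using rt_walk[of "fE k" x y "fV k"] x fE_range by blast
qed

lemma lower:
  assumes t: "tsp_tour (fV k) (fE k) w"
  shows "2 * gn k + 2 * gm k \<le> walk_length w"
proof -
  have n6: "gn k \<ge> 6" by (rule gn_ge)
  have sw: "set w = fV k" using t unfolding tsp_tour_def by simp
  have "0 \<in> set w" "1 \<in> set w" using sw n6 unfolding fV_def by auto
  then have "card {0, 1::nat} \<le> card (set w)" by (intro card_mono) auto
  then have len: "2 \<le> length w" using card_length[of w] by simp
  interpret tourctx "fV k" "fE k" w
    by unfold_locales (use t fE_sym fE_irr len in auto)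
  have if1: "iface (fE k) k 0 (gn k + 1) (gn k)"
    unfolding iface_def using gE_lo1[of _ "gn k" k] by (auto simp: fE_def)
  have if2: "iface (fE k) k (gn k) 1 0"
    unfolding iface_def using gE_hi1[of 0 k] n6 by (auto simp: fE_def)
  have s1: "{0..<0+gn k} \<subseteq> fV k" unfolding fV_def by auto
  have x1: "gn k + 1 \<in> fV k" using n6 unfolding fV_def by simp
  have s2: "{gn k..<gn k+gn k} \<subseteq> fV k" unfolding fV_def by auto
  have x2: "1 \<in> fV k" using n6 unfolding fV_def by simp
  have g1: "gn k + gm k \<le> vis w {0..<0 + gn k}"
    using gadget[OF if1 s1 x1] by blast
  have g2: "gn k + gm k \<le> vis w {gn k..<gn k + gn k}"
    using gadget[OF if2 s2 x2] by blast
  have "fV k = {0..<0+gn k} \<union> {gn k..<gn k + gn k}" unfolding fV_def by auto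
  then have "vis w (fV k) = vis w {0..<0+gn k} + vis w {gn k..<gn k + gn k}"
    using vis_union by (metis (no_types, lifting) atLeastLessThan_iff disjoint_iff not_less add_0)
  moreover have "vis w (fV k) = length w - 1" using vis_all sw by simp
  ultimately show ?thesis using g1 g2 unfolding walk_length_def by simp
qed

end

theorem theorem2:
  fixes \<epsilon> :: real
  assumes "\<epsilon> > 0"
  shows "\<exists>(V::nat set) E. simple_graph V E \<and> connected_graph V E \<and> bipartite V E \<and> cubic V E \<and>
           (\<forall>w. tsp_tour V E w \<longrightarrow> real (walk_length w) \<ge> (1.2 - \<epsilon>) * real (card V))"
proof -
  obtain k :: nat where k: "3 / \<epsilon> < real k" using reals_Archimedean2 by blast
  have nk: "real k \<le> real (gn k)" using gn_ge_k[of k] by simp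
  have en: "\<epsilon> * real (gn k) > 3"
  proof -
    have "3 / \<epsilon> < real (gn k)" using k nk by linarith
    then show ?thesis using assms by (simp add: field_simps)
  qed
  have cardV: "card (fV k) = 2 * gn k" unfolding fV_def by simp
  have nm: "real (gn k) = 5 * real (gm k) + 6" using gn_gm[of k] by simp
  show ?thesis
  proof (intro exI conjI allI impI)
    show "simple_graph (fV k) (fE k)" by (rule simple)
    show "connected_graph (fV k) (fE k)" by (rule conn)
    show "bipartite (fV k) (fE k)" by (rule bip)
    show "cubic (fV k) (fE k)" by (rule cub)
  next
    fix w assume t: "tsp_tour (fV k) (fE k) w"
    have "2 * gn k + 2 * gm k \<le> walk_length w" by (rule lower[OF t])
    then have l: "real (walk_length w) \<ge> 2 * real (gn k) + 2 * real (gm k)" by linarith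
    have "(1.2 - \<epsilon>) * real (card (fV k)) = 2.4 * real (gn k) - 2 * (\<epsilon> * real (gn k))"
      using cardV by (simp add: algebra_simps)
    also have "\<dots> \<le> 2 * real (gn k) + 2 * real (gm k)" using en nm by linarith
    finally show "real (walk_length w) \<ge> (1.2 - \<epsilon>) * real (card (fV k))" using l by linarith
  qed
qed


end
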